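(* Let $x$ be a stable g-matching with $x\ne x^{\max}$, let $w\in W$, and let $(c,a)$ and $(c',a')$ be disjoint (no common edge) essential $w$-pairs under $x$. Let $z:=x_w+\mathbf 1^a-\mathbf 1^c$ and $z':=x_w+\mathbf 1^{a'}-\mathbf 1^{c'}$. Then: (i) the vectors $z+\mathbf 1^{a'}-\mathbf 1^{c'}$ and $z'+\mathbf 1^a-\mathbf 1^c$ are acceptable for $w$; (ii) no edge $d\in U_F^+(x)$ is interesting for $w$ under $y:=x_w+\mathbf 1^a-\mathbf 1^c+\mathbf 1^{a'}-\mathbf 1^{c'}$; and (iii) the pair $(c',a')$ is essential under $z$, and $(c,a)$ is essential under $z'$ (with $z$, resp. $z'$, in place of $x_w$ in the definitions of legal and essential $w$-pairs).
   Context: Let $G=(V,E)$ be a finite bipartite graph with color classes $W$ and $F$; the edge joining $w\in W$ and $f\in F$ is written $wf$. Let $b\in\mathbb Z_+^E$ be capacities. For $v\in V$, $E_v$ is the set of edges at $v$, $\mathcal B_v=\{z\in\mathbb Z_+^{E_v}: z\le b|_{E_v}\}$, $\mathbf 1^e$ the unit vector of $e$, $|z|=\sum_e|z(e)|$, $\wedge,\vee$ componentwise min/max. Each $v$ has a choice function $C_v:\mathcal B_v\to\mathcal B_v$ with $C_v(z)\le z$ and, for all $z,z'$: (A1) $z\ge z'\ge C_v(z)\Rightarrow C_v(z')=C_v(z)$; (A2) $z\ge z'\Rightarrow C_v(z)\wedge z'\le C_v(z')$; (A3) $z\ge z'\Rightarrow|C_v(z)|\ge|C_v(z')|$. $z$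 is acceptable if $C_v(z)=z$; for distinct acceptable $z,z'$, $z'\prec_v z$ iff $C_v(z\vee z')=z$. $x_v$ = restriction of $x$ to $E_v$. A g-matching is $x\in\mathbb Z_+^E$, $x\le b$, each $x_v$ acceptable; $x\prec_F y$ (distinct) iff $x_f\preceq_f y_f$ for all $f\in F$. $e\in E_v$ is interesting for $v$ under acceptable $z$ if some $z'\in\mathcal B_v$ has $z'(e)>z(e)$, $z'(e')=z(e')$ for $e'\neq e$, $C_v(z')(e)>z(e)$; $e=wf$ is interesting for $v\in\{w,f\}$ under a g-matching $x$ if so under $x_v$, and blocks $x$ if interesting for both endpoints; stable g-matchings (no blocking edge) form a finite lattice under $\prec_F$ with maximum $x^{\max}$. For stable $x$: $U_F^+(x)$ = edges $wf$ interesting for $f$ under $x$; $U_F^-(x)$ = edges $wf$ with $x(wf)>0$ not interesting for $f$ under $x$. For $w\in W$, a legal $w$-pair under $x$ is $(c,a)$ with $c\in U_F^-(x)\cap E_w$, $a\in U_F^+(x)\cap E_w$ and $C_w(x_w+\mathbf 1^a-\mathbf 1^c)=x_w+\mathbf 1^a-\mathbf 1^c$; it is essential if no $d\in(U_F^+(x)\cap E_w)\setminus\{a\}$ is interesting for $w$ under $x_w+\mathbf 1^a-\mathbf 1^c$. *)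

theory Defs
  imports Main "HOL-Library.Function_Algebras"
begin

text \<open>Vertices have type 'v; an edge wf (w in W, f in F) is the pair (w,f).
  Vectors in Z_+^{E_v} are represented as functions on edges with integer
  values, nonnegative on E_v and zero outside E_v.\<close>

type_synonym 'v vec = "'v \<times> 'v \<Rightarrow> int"

definition Ev :: "('v \<times> 'v) set \<Rightarrow> 'v \<Rightarrow> ('v \<times> 'v) set" where
  "Ev E v = {e \<in> E. fst e = v \<or> snd e = v}"

definition Bv :: "('v \<times> 'v) set \<Rightarrow> 'v vec \<Rightarrow> 'v \<Rightarrow> 'v vec set" where
  "Bv E b v = {z. (\<forall>e \<in> Ev E v. 0 \<le> z e \<and> z e \<le> b e) \<and> (\<forall>e. e \<notin> Ev E v \<longrightarrow> z e = 0)}"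

definition unitv :: "'v \<times> 'v \<Rightarrow> 'v vec" where
  "unitv e = (\<lambda>e'. if e' = e then 1 else 0)"

definition vnorm :: "('v \<times> 'v) set \<Rightarrow> 'v \<Rightarrow> 'v vec \<Rightarrow> int" where
  "vnorm E v z = (\<Sum>e \<in> Ev E v. \<bar>z e\<bar>)"

definition vmin :: "'v vec \<Rightarrow> 'v vec \<Rightarrow> 'v vec" where
  "vmin z z' = (\<lambda>e. min (z e) (z' e))"

definition vmax :: "'v vec \<Rightarrow> 'v vec \<Rightarrow> 'v vec" where
  "vmax z z' = (\<lambda>e. max (z e) (z' e))"

definition choice_fun :: "('v \<times> 'v) set \<Rightarrow> 'v vec \<Rightarrow> 'v \<Rightarrow> ('v vec \<Rightarrow> 'v vec) \<Rightarrow> bool" where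
  "choice_fun E b v Cv \<longleftrightarrow>
     (\<forall>z \<in> Bv E b v. Cv z \<in> Bv E b v \<and> Cv z \<le> z) \<and>
     (\<forall>z \<in> Bv E b v. \<forall>z' \<in> Bv E b v. z \<ge> z' \<and> z' \<ge> Cv z \<longrightarrow> Cv z' = Cv z) \<and>
     (\<forall>z \<in> Bv E b v. \<forall>z' \<in> Bv E b v. z \<ge> z' \<longrightarrow> vmin (Cv z) z' \<le> Cv z') \<and>
     (\<forall>z \<in> Bv E b v. \<forall>z' \<in> Bv E b v. z \<ge> z' \<longrightarrow> vnorm E v (Cv z) \<ge> vnorm E v (Cv z'))"

definition model :: "'v set \<Rightarrow> 'v set \<Rightarrow> ('v \<times> 'v) set \<Rightarrow> 'v vec \<Rightarrow> ('v \<Rightarrow> 'v vec \<Rightarrow> 'v vec) \<Rightarrow> bool" where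
  "model W F E b C \<longleftrightarrow> finite W \<and> finite F \<and> W \<inter> F = {} \<and> E \<subseteq> W \<times> F \<and>
     (\<forall>e \<in> E. 0 \<le> b e) \<and> (\<forall>v \<in> W \<union> F. choice_fun E b v (C v))"

definition acceptable :: "('v \<times> 'v) set \<Rightarrow> 'v vec \<Rightarrow> ('v \<Rightarrow> 'v vec \<Rightarrow> 'v vec) \<Rightarrow> 'v \<Rightarrow> 'v vec \<Rightarrow> bool" where
  "acceptable E b C v z \<longleftrightarrow> z \<in> Bv E b v \<and> C v z = z"

definition pref :: "('v \<times> 'v) set \<Rightarrow> 'v vec \<Rightarrow> ('v \<Rightarrow> 'v vec \<Rightarrow> 'v vec) \<Rightarrow> 'v \<Rightarrow> 'v vec \<Rightarrow> 'v vec \<Rightarrow> bool" where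
  "pref E b C v z' z \<longleftrightarrow> acceptable E b C v z \<and> acceptable E b C v z' \<and> z \<noteq> z' \<and>
     C v (vmax z z') = z"

definition restr :: "('v \<times> 'v) set \<Rightarrow> 'v \<Rightarrow> 'v vec \<Rightarrow> 'v vec" where
  "restr E v x = (\<lambda>e. if e \<in> Ev E v then x e else 0)"

definition g_matching :: "'v set \<Rightarrow> 'v set \<Rightarrow> ('v \<times> 'v) set \<Rightarrow> 'v vec \<Rightarrow> ('v \<Rightarrow> 'v vec \<Rightarrow> 'v vec) \<Rightarrow> 'v vec \<Rightarrow> bool" where
  "g_matching W F E b C x \<longleftrightarrow>
     (\<forall>e \<in> E. 0 \<le> x e \<and> x e \<le> b e) \<and> (\<forall>e. e \<notin> E \<longrightarrow> x e = 0) \<and>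
     (\<forall>v \<in> W \<union> F. acceptable E b C v (restr E v x))"

definition precF :: "'v set \<Rightarrow> 'v set \<Rightarrow> ('v \<times> 'v) set \<Rightarrow> 'v vec \<Rightarrow> ('v \<Rightarrow> 'v vec \<Rightarrow> 'v vec) \<Rightarrow> 'v vec \<Rightarrow> 'v vec \<Rightarrow> bool" where
  "precF W F E b C x y \<longleftrightarrow> g_matching W F E b C x \<and> g_matching W F E b C y \<and> x \<noteq> y \<and>
     (\<forall>f \<in> F. restr E f x = restr E f y \<or> pref E b C f (restr E f x) (restr E f y))"

definition interesting :: "('v \<times> 'v) set \<Rightarrow> 'v vec \<Rightarrow> ('v \<Rightarrow> 'v vec \<Rightarrow> 'v vec) \<Rightarrow> 'v \<Rightarrow> 'v vec \<Rightarrow> 'v \<times> 'v \<Rightarrow> bool" where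
  "interesting E b C v z e \<longleftrightarrow> e \<in> Ev E v \<and>
     (\<exists>z' \<in> Bv E b v. z' e > z e \<and> (\<forall>e'. e' \<noteq> e \<longrightarrow> z' e' = z e') \<and> C v z' e > z e)"

definition blocks :: "('v \<times> 'v) set \<Rightarrow> 'v vec \<Rightarrow> ('v \<Rightarrow> 'v vec \<Rightarrow> 'v vec) \<Rightarrow> 'v vec \<Rightarrow> 'v \<times> 'v \<Rightarrow> bool" where
  "blocks E b C x e \<longleftrightarrow> e \<in> E \<and>
     interesting E b C (fst e) (restr E (fst e) x) e \<and>
     interesting E b C (snd e) (restr E (snd e) x) e"

definition stable :: "'v set \<Rightarrow> 'v set \<Rightarrow> ('v \<times> 'v) set \<Rightarrow> 'v vec \<Rightarrow> ('v \<Rightarrow> 'v vec \<Rightarrow> 'v vec) \<Rightarrow> 'v vec \<Rightarrow> bool" where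
  "stable W F E b C x \<longleftrightarrow> g_matching W F E b C x \<and> (\<forall>e \<in> E. \<not> blocks E b C x e)"

definition is_xmax :: "'v set \<Rightarrow> 'v set \<Rightarrow> ('v \<times> 'v) set \<Rightarrow> 'v vec \<Rightarrow> ('v \<Rightarrow> 'v vec \<Rightarrow> 'v vec) \<Rightarrow> 'v vec \<Rightarrow> bool" where
  "is_xmax W F E b C xm \<longleftrightarrow> stable W F E b C xm \<and>
     (\<forall>y. stable W F E b C y \<longrightarrow> y = xm \<or> precF W F E b C y xm)"

definition UFplus :: "('v \<times> 'v) set \<Rightarrow> 'v vec \<Rightarrow> ('v \<Rightarrow> 'v vec \<Rightarrow> 'v vec) \<Rightarrow> 'v vec \<Rightarrow> ('v \<times> 'v) set" where
  "UFplus E b C x = {e \<in> E. interesting E b C (snd e) (restr E (snd e) x) e}"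

definition UFminus :: "('v \<times> 'v) set \<Rightarrow> 'v vec \<Rightarrow> ('v \<Rightarrow> 'v vec \<Rightarrow> 'v vec) \<Rightarrow> 'v vec \<Rightarrow> ('v \<times> 'v) set" where
  "UFminus E b C x = {e \<in> E. x e > 0 \<and> \<not> interesting E b C (snd e) (restr E (snd e) x) e}"

text \<open>Legal / essential w-pairs under x, with a vector z in place of x_w
  (take z = restr E w x for the original notion).\<close>
definition legal_pair :: "('v \<times> 'v) set \<Rightarrow> 'v vec \<Rightarrow> ('v \<Rightarrow> 'v vec \<Rightarrow> 'v vec) \<Rightarrow> 'v vec \<Rightarrow> 'v \<Rightarrow> 'v vec \<Rightarrow> 'v \<times> 'v \<Rightarrow> 'v \<times> 'v \<Rightarrow> bool" where
  "legal_pair E b C x w z c a \<longleftrightarrow>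
     c \<in> UFminus E b C x \<inter> Ev E w \<and> a \<in> UFplus E b C x \<inter> Ev E w \<and>
     acceptable E b C w (z + unitv a - unitv c)"

definition essential_pair :: "('v \<times> 'v) set \<Rightarrow> 'v vec \<Rightarrow> ('v \<Rightarrow> 'v vec \<Rightarrow> 'v vec) \<Rightarrow> 'v vec \<Rightarrow> 'v \<Rightarrow> 'v vec \<Rightarrow> 'v \<times> 'v \<Rightarrow> 'v \<times> 'v \<Rightarrow> bool" where
  "essential_pair E b C x w z c a \<longleftrightarrow> legal_pair E b C x w z c a \<and>
     (\<forall>d \<in> (UFplus E b C x \<inter> Ev E w) - {a}. \<not> interesting E b C w (z + unitv a - unitv c) d)"

end

theory Submission
  imports Defs
begin

declare split_paired_All[simp del] split_paired_Ex[simp del]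

lemma unitv_apply[simp]: "unitv e e' = (if e' = e then 1 else 0)"
  by (simp add: unitv_def)

lemma cf_parts:
  assumes "choice_fun E b v Cv"
  shows "(\<forall>z \<in> Bv E b v. Cv z \<in> Bv E b v \<and> Cv z \<le> z) \<and>
     (\<forall>z \<in> Bv E b v. \<forall>z' \<in> Bv E b v. z \<ge> z' \<and> z' \<ge> Cv z \<longrightarrow> Cv z' = Cv z) \<and>
     (\<forall>z \<in> Bv E b v. \<forall>z' \<in> Bv E b v. z \<ge> z' \<longrightarrow> vmin (Cv z) z' \<le> Cv z') \<and>
     (\<forall>z \<in> Bv E b v. \<forall>z' \<in> Bv E b v. z \<ge> z' \<longrightarrow> vnorm E v (Cv z) \<ge> vnorm E v (Cv z'))"
  using assms by (simp only: choice_fun_def)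

lemma cfA0: "choice_fun E b v Cv \<Longrightarrow> z \<in> Bv E b v \<Longrightarrow> Cv z \<in> Bv E b v \<and> Cv z \<le> z"
  using cf_parts[THEN conjunct1] by (rule bspec)
lemma cfA1: "choice_fun E b v Cv \<Longrightarrow> z \<in> Bv E b v \<Longrightarrow> z' \<in> Bv E b v \<Longrightarrow> z' \<le> z \<Longrightarrow> Cv z \<le> z' \<Longrightarrow> Cv z' = Cv z"
proof -
  assume a: "choice_fun E b v Cv" "z \<in> Bv E b v" "z' \<in> Bv E b v" "z' \<le> z" "Cv z \<le> z'"
  have "\<forall>z \<in> Bv E b v. \<forall>z' \<in> Bv E b v. z \<ge> z' \<and> z' \<ge> Cv z \<longrightarrow> Cv z' = Cv z"
    using cf_parts[OF a(1)] by (elim conjE)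
  then show ?thesis using a(2-5) by blast
qed
lemma cfA2: "choice_fun E b v Cv \<Longrightarrow> z \<in> Bv E b v \<Longrightarrow> z' \<in> Bv E b v \<Longrightarrow> z' \<le> z \<Longrightarrow> min (Cv z e) (z' e) \<le> Cv z' e"
proof -
  assume a: "choice_fun E b v Cv" "z \<in> Bv E b v" "z' \<in> Bv E b v" "z' \<le> z"
  have "\<forall>z \<in> Bv E b v. \<forall>z' \<in> Bv E b v. z \<ge> z' \<longrightarrow> vmin (Cv z) z' \<le> Cv z'"
    using cf_parts[OF a(1)] by (elim conjE)
  then have "vmin (Cv z) z' \<le> Cv z'" using a(2-4) by blast
  then show ?thesis unfolding vmin_def by (rule le_funD)
qed
lemma cfA3: "choice_fun E b v Cv \<Longrightarrow> z \<in> Bv E b v \<Longrightarrow> z' \<in> Bv E b v \<Longrightarrow> z' \<le> z \<Longrightarrow> vnorm E v (Cv z') \<le> vnorm E v (Cv z)"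
proof -
  assume a: "choice_fun E b v Cv" "z \<in> Bv E b v" "z' \<in> Bv E b v" "z' \<le> z"
  have "\<forall>z \<in> Bv E b v. \<forall>z' \<in> Bv E b v. z \<ge> z' \<longrightarrow> vnorm E v (Cv z) \<ge> vnorm E v (Cv z')"
    using cf_parts[OF a(1)] by (elim conjE)
  then show ?thesis using a(2-4) by blast
qed

lemma BvD1: "z \<in> Bv E b v \<Longrightarrow> e \<in> Ev E v \<Longrightarrow> 0 \<le> z e \<and> z e \<le> b e"
  unfolding Bv_def by blast
lemma BvD2: "z \<in> Bv E b v \<Longrightarrow> e \<notin> Ev E v \<Longrightarrow> z e = 0"
  unfolding Bv_def by blast
lemma BvI: "(\<And>e. e \<in> Ev E v \<Longrightarrow> 0 \<le> z e \<and> z e \<le> b e) \<Longrightarrow> (\<And>e. e \<notin> Ev E v \<Longrightarrow> z e = 0) \<Longrightarrow> z \<in> Bv E b v"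
  unfolding Bv_def by blast

lemma vnorm_Bv: "f \<in> Bv E b v \<Longrightarrow> vnorm E v f = sum f (Ev E v)"
  unfolding vnorm_def by (intro sum.cong) (auto dest: BvD1)

lemma sum_gap:
  assumes "finite G" "\<forall>e\<in>G. q e \<le> (p::'a \<Rightarrow> int) e" "e \<in> G"
  shows "sum q G + (p e - q e) \<le> sum p G"
proof -
  have "p e - q e \<le> sum (\<lambda>x. p x - q x) G"
    using assms by (intro member_le_sum) auto
  also have "\<dots> = sum p G - sum q G" by (simp add: sum_subtractf)
  finally show ?thesis by simp
qed

lemma sum_unitv: "finite G \<Longrightarrow> e \<in> G \<Longrightarrow> sum (unitv e) G = 1"
  unfolding unitv_def by simp

lemma notint_fix:
  assumes cf: "choice_fun E b w (C w)" and vB: "v \<in> Bv E b w" and vC: "C w v = v"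
    and ni: "\<not> interesting E b C w v e" and VB: "V \<in> Bv E b w"
    and ge: "V e \<ge> v e" and eq: "\<forall>e'. e' \<noteq> e \<longrightarrow> V e' = v e'"
  shows "C w V = v"
proof (cases "V e = v e")
  case True
  have "V = v"
  proof (rule ext)
    fix e' show "V e' = v e'" using True eq[rule_format, of e'] by (cases "e' = e") auto
  qed
  then show ?thesis using vC by simp
next
  case False
  then have gt: "V e > v e" using ge by simp
  have eE: "e \<in> Ev E w"
  proof (rule ccontr)
    assume ne: "e \<notin> Ev E w"
    have "V e = 0" "v e = 0" using BvD2[OF vB ne] BvD2[OF VB ne] by auto
    then show False using gt by simp
  qed
  have ngt: "\<not> C w V e > v e" using ni eE VB gt eq unfolding interesting_def by blast
  have CVle: "C w V \<le> V" using cfA0[OF cf VB] by blast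
  have le: "C w V \<le> v"
  proof (rule le_funI)
    fix e' show "C w V e' \<le> v e'"
      using le_funD[OF CVle, of e'] eq[rule_format, of e'] ngt by (cases "e' = e") auto
  qed
  have vV: "v \<le> V"
  proof (rule le_funI)
    fix e' show "v e' \<le> V e'"
      using eq[rule_format, of e'] ge by (cases "e' = e") auto
  qed
  have "C w v = C w V" using cfA1[OF cf VB vB vV le] .
  then show ?thesis using vC by simp
qed

lemma notint_fix2:
  assumes cf: "choice_fun E b w (C w)" and vB: "v \<in> Bv E b w" and vC: "C w v = v"
    and ni1: "\<not> interesting E b C w v e1" and ni2: "\<not> interesting E b C w v e2"
    and VB: "V \<in> Bv E b w"
    and ge1: "V e1 \<ge> v e1" and ge2: "V e2 \<ge> v e2"
    and eq: "\<forall>e'. e' \<noteq> e1 \<and> e' \<noteq> e2 \<longrightarrow> V e' = v e'"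
  shows "C w V = v"
proof -
  define V' where "V' = V(e1 := v e1)"
  have V'B: "V' \<in> Bv E b w"
    by (rule BvI) (use BvD1[OF VB] BvD1[OF vB] BvD2[OF VB] BvD2[OF vB] in \<open>auto simp add: V'_def\<close>)
  have CV': "C w V' = v"
    by (rule notint_fix[OF cf vB vC ni2 V'B]) (use ge2 eq in \<open>auto simp: V'_def\<close>)
  have V'le: "V' \<le> V" using ge1 unfolding V'_def le_fun_def by auto
  have A2: "min (C w V e) (V' e) \<le> v e" for e
    using cfA2[OF cf VB V'B V'le, of e] CV' by simp
  have CVle: "C w V \<le> V" using cfA0[OF cf VB] by blast
  define V'' where "V'' = v(e1 := V e1)"
  have V''B: "V'' \<in> Bv E b w"
    by (rule BvI) (use BvD1[OF VB] BvD1[OF vB] BvD2[OF VB] BvD2[OF vB] in \<open>auto simp add: V''_def\<close>)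
  have CV'': "C w V'' = v"
    by (rule notint_fix[OF cf vB vC ni1 V''B]) (use ge1 in \<open>auto simp: V''_def\<close>)
  have "C w V \<le> V''"
    unfolding le_fun_def V''_def
  proof
    fix e show "C w V e \<le> (v(e1 := V e1)) e"
    proof (cases "e = e1")
      case True then show ?thesis using le_funD[OF CVle, of e1] by simp
    next
      case False
      then have "V' e = V e" by (simp add: V'_def)
      then show ?thesis using A2[of e] le_funD[OF CVle, of e] False by (simp add: min_def split: if_splits)
    qed
  qed
  moreover have vV: "v e \<le> V e" for e
    using ge1 ge2 eq[rule_format, of e] by (cases "e = e1"; cases "e = e2") auto
  then have "V'' \<le> V" unfolding V''_def le_fun_def by simp
  ultimately have "C w V'' = C w V" using cfA1[OF cf VB V''B] by simp
  then show ?thesis using CV'' by simp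
qed

lemma derived_ni:
  assumes cf: "choice_fun E b w (C w)" and fin: "finite (Ev E w)"
    and XB: "X \<in> Bv E b w" and XC: "C w X = X" and niX: "\<not> interesting E b C w X a"
    and zB: "X + unitv a - unitv c \<in> Bv E b w"
    and cE: "c \<in> Ev E w" and ac: "a \<noteq> c"
  shows "\<not> interesting E b C w (X + unitv a - unitv c) a"
proof
  let ?z = "X + unitv a - unitv c"
  have zE: "?z e = X e + (if e = a then 1 else 0) - (if e = c then 1 else 0)" for e
    by (simp add: unitv_def)
  assume "interesting E b C w ?z a"
  then obtain V where aE: "a \<in> Ev E w" and VB: "V \<in> Bv E b w" and Va: "V a > ?z a"
    and Veq: "\<forall>e'. e' \<noteq> a \<longrightarrow> V e' = ?z e'" and CVa: "C w V a > ?z a"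
    unfolding interesting_def by blast
  define Vx where "Vx = V + unitv c"
  have VxE: "Vx e = V e + (if e = c then 1 else 0)" for e by (simp add: Vx_def unitv_def)
  have VxB: "Vx \<in> Bv E b w"
    unfolding Bv_def
  proof (intro CollectI conjI ballI allI impI)
    fix e assume eE: "e \<in> Ev E w"
    show "0 \<le> Vx e" using BvD1[OF VB eE] VxE[of e] by auto
    show "Vx e \<le> b e"
    proof (cases "e = c")
      case True
      have "V c = X c - 1" using Veq[rule_format, of c] ac by (simp add: unitv_def)
      then have "Vx e = X e" using VxE True by simp
      then show ?thesis using BvD1[OF XB eE] by simp
    qed (use BvD1[OF VB eE] VxE[of e] in auto)
  next
    fix e assume "e \<notin> Ev E w"
    then show "Vx e = 0" using BvD2[OF VB, of e] cE VxE[of e] by auto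
  qed
  have "Vx a \<ge> X a" using Va VxE[of a] ac by simp
  moreover have "\<forall>e'. e' \<noteq> a \<longrightarrow> Vx e' = X e'"
  proof (intro allI impI)
    fix e' assume "e' \<noteq> a"
    then show "Vx e' = X e'" using Veq[rule_format, of e'] VxE[of e'] ac by simp
  qed
  ultimately have CVx: "C w Vx = X"
    using notint_fix[OF cf XB XC niX VxB] by blast
  have VVx: "V \<le> Vx" unfolding le_fun_def VxE by simp
  have low: "X e - (if e = c then 1 else 0) \<le> C w V e" for e
  proof -
    have "min (X e) (V e) \<le> C w V e" using cfA2[OF cf VxB VB VVx, of e] CVx by simp
    moreover have "X e - (if e = c then 1 else 0) \<le> V e"
      using Va Veq[rule_format, of e] ac by (cases "e = a") auto
    ultimately show ?thesis by (auto simp: min_def split: if_splits)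
  qed
  have n1: "vnorm E w (C w V) \<le> vnorm E w X" using cfA3[OF cf VxB VB VVx] CVx by simp
  have CVB: "C w V \<in> Bv E b w" using cfA0[OF cf VB] by blast
  have "sum (\<lambda>e. X e - (if e = c then 1 else 0)) (Ev E w) + (C w V a - (X a - (if a = c then 1 else 0)))
      \<le> sum (C w V) (Ev E w)"
    by (rule sum_gap[OF fin]) (use low aE in auto)
  moreover have "sum (\<lambda>e. X e - (if e = c then 1 else 0)) (Ev E w) = sum X (Ev E w) - sum (\<lambda>e. if e = c then 1 else 0) (Ev E w)"
    by (rule sum_subtractf)
  moreover have "sum (\<lambda>e. if e = c then 1 else (0::int)) (Ev E w) = 1"
    using fin cE by simp
  moreover have "?z a = X a + 1" using ac by simp
  moreover have "sum (C w V) (Ev E w) \<le> sum X (Ev E w)"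
    using n1 vnorm_Bv[OF CVB] vnorm_Bv[OF XB] by simp
  moreover have "X a - (if a = c then 1 else 0) = X a" using ac by simp
  ultimately show False using CVa by linarith
qed

theorem lemma3p7:
  fixes W F :: "'v set" and E :: "('v \<times> 'v) set" and b x xm :: "'v vec"
    and C :: "'v \<Rightarrow> 'v vec \<Rightarrow> 'v vec" and w :: 'v and c a c' a' :: "'v \<times> 'v"
  assumes "model W F E b C"
    and "stable W F E b C x"
    and "is_xmax W F E b C xm" and "x \<noteq> xm"
    and "w \<in> W"
    and "essential_pair E b C x w (restr E w x) c a"
    and "essential_pair E b C x w (restr E w x) c' a'"
    and "{c, a} \<inter> {c', a'} = {}"
  defines "z \<equiv> restr E w x + unitv a - unitv c"
    and "z' \<equiv> restr E w x + unitv a' - unitv c'"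
    and "y \<equiv> restr E w x + unitv a - unitv c + unitv a' - unitv c'"
  shows "acceptable E b C w (z + unitv a' - unitv c') \<and> acceptable E b C w (z' + unitv a - unitv c)
    \<and> (\<forall>d \<in> UFplus E b C x. \<not> interesting E b C w y d)
    \<and> essential_pair E b C x w z c' a' \<and> essential_pair E b C x w z' c a"
  proof -
  let ?G = "Ev E w"
  let ?X = "restr E w x"
  have md: "finite W \<and> finite F \<and> W \<inter> F = {} \<and> E \<subseteq> W \<times> F \<and>
     (\<forall>e \<in> E. 0 \<le> b e) \<and> (\<forall>v \<in> W \<union> F. choice_fun E b v (C v))"
    using assms(1) unfolding model_def .
  have cf: "choice_fun E b w (C w)" using md assms(5) by blast
  have EWF: "E \<subseteq> W \<times> F" and WF: "W \<inter> F = {}" using md by blast+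
  have finE: "finite E" using md finite_subset[OF EWF] by blast
  have fin: "finite ?G" by (rule finite_subset[OF _ finE]) (auto simp: Ev_def)
  have gm: "g_matching W F E b C x" using assms(2) unfolding stable_def by blast
  have "acceptable E b C w ?X" using gm assms(5) unfolding g_matching_def by blast
  then have XB: "?X \<in> Bv E b w" and XC: "C w ?X = ?X" unfolding acceptable_def by blast+
  have e1: "c \<in> UFminus E b C x \<inter> ?G" "a \<in> UFplus E b C x \<inter> ?G"
      "acceptable E b C w (?X + unitv a - unitv c)"
      "\<forall>d \<in> (UFplus E b C x \<inter> ?G) - {a}. \<not> interesting E b C w (?X + unitv a - unitv c) d"
    using assms(6) unfolding essential_pair_def legal_pair_def by blast+
  have e2: "c' \<in> UFminus E b C x \<inter> ?G" "a' \<in> UFplus E b C x \<inter> ?G"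
      "acceptable E b C w (?X + unitv a' - unitv c')"
      "\<forall>d \<in> (UFplus E b C x \<inter> ?G) - {a'}. \<not> interesting E b C w (?X + unitv a' - unitv c') d"
    using assms(7) unfolding essential_pair_def legal_pair_def by blast+
  have disj: "UFplus E b C x \<inter> UFminus E b C x = {}" unfolding UFplus_def UFminus_def by blast
  have cG: "c \<in> ?G" and aG: "a \<in> ?G" and c'G: "c' \<in> ?G" and a'G: "a' \<in> ?G" using e1 e2 by blast+
  have aU: "a \<in> UFplus E b C x" and a'U: "a' \<in> UFplus E b C x" using e1 e2 by blast+
  have cU: "c \<in> UFminus E b C x" and c'U: "c' \<in> UFminus E b C x" using e1 e2 by blast+
  have ac: "a \<noteq> c" using aU cU disj by blast
  have a'c': "a' \<noteq> c'" using a'U c'U disj by blast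
  have d4: "c \<noteq> c'" "c \<noteq> a'" "a \<noteq> c'" "a \<noteq> a'" using assms(8) by auto
  have zB: "z \<in> Bv E b w" and zC: "C w z = z" using e1(3) unfolding z_def acceptable_def by blast+
  have z'B: "z' \<in> Bv E b w" and z'C: "C w z' = z'" using e2(3) unfolding z'_def acceptable_def by blast+
  have niX: "\<not> interesting E b C w ?X d" if dU: "d \<in> UFplus E b C x" for d
  proof (cases "d \<in> ?G")
    case False then show ?thesis unfolding interesting_def by blast
  next
    case True
    have dE: "d \<in> E" and ints: "interesting E b C (snd d) (restr E (snd d) x) d"
      using dU unfolding UFplus_def by blast+
    have "\<not> blocks E b C x d" using assms(2) dE unfolding stable_def by blast
    then have nf: "\<not> interesting E b C (fst d) (restr E (fst d) x) d"
      using dE ints unfolding blocks_def by blast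
    have "snd d \<in> F" using dE EWF by auto
    then have "snd d \<noteq> w" using WF assms(5) by blast
    then have "fst d = w" using True unfolding Ev_def by blast
    then show ?thesis using nf by simp
  qed
  have ni_z: "\<not> interesting E b C w z d" if dU: "d \<in> UFplus E b C x" for d
  proof (cases "d \<in> ?G")
    case False then show ?thesis unfolding interesting_def by blast
  next
    case True
    show ?thesis
    proof (cases "d = a")
      case True
      show ?thesis unfolding z_def True
        by (rule derived_ni[OF cf fin XB XC niX[OF aU] _ cG ac]) (use zB z_def in simp)
    next
      case False
      then show ?thesis using e1(4) dU True unfolding z_def by blast
    qed
  qed
  have ni_z': "\<not> interesting E b C w z' d" if dU: "d \<in> UFplus E b C x" for d
  proof (cases "d \<in> ?G")
    case False then show ?thesis unfolding interesting_def by blast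
  next
    case True
    show ?thesis
    proof (cases "d = a'")
      case True
      show ?thesis unfolding z'_def True
        by (rule derived_ni[OF cf fin XB XC niX[OF a'U] _ c'G a'c']) (use z'B z'_def in simp)
    next
      case False
      then show ?thesis using e2(4) dU True unfolding z'_def by blast
    qed
  qed
  have yz: "y e = z e + (if e = a' then 1 else 0) - (if e = c' then 1 else 0)" for e
    by (simp add: y_def z_def)
  have yz': "y e = z' e + (if e = a then 1 else 0) - (if e = c then 1 else 0)" for e
    by (simp add: y_def z'_def)
  have zy: "z + unitv a' - unitv c' = y" by (rule ext) (simp add: yz)
  have z'y: "z' + unitv a - unitv c = y" by (rule ext) (simp add: yz')
  have yor: "y e = z e \<or> y e = z' e" for e
    using yz[of e] yz'[of e] d4 by auto
  have yB: "y \<in> Bv E b w"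
  proof (rule BvI)
    fix e assume "e \<in> ?G" then show "0 \<le> y e \<and> y e \<le> b e"
      using yor[of e] BvD1[OF zB] BvD1[OF z'B] by metis
  next
    fix e assume "e \<notin> ?G" then show "y e = 0"
      using yor[of e] BvD2[OF zB] BvD2[OF z'B] by metis
  qed
  have sumy: "sum y ?G = sum z ?G"
  proof -
    have "sum y ?G = sum (\<lambda>e. z e + (if e = a' then 1 else 0) - (if e = c' then 1 else 0)) ?G"
      using yz by (intro sum.cong) auto
    also have "\<dots> = sum z ?G + sum (\<lambda>e. if e = a' then 1 else 0) ?G - sum (\<lambda>e. if e = c' then 1 else (0::int)) ?G"
      by (simp add: sum_subtractf sum.distrib)
    also have "\<dots> = sum z ?G" using fin a'G c'G by simp
    finally show ?thesis .
  qed
  have KEY: "(\<forall>e. y e \<le> C w V e) \<and> sum (C w V) ?G \<le> sum y ?G"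
    if VB: "V \<in> Bv E b w" and dU: "d \<in> UFplus E b C x" and Vd: "V d \<ge> y d"
      and Veq: "\<forall>e'. e' \<noteq> d \<longrightarrow> V e' = y e'" for V d
  proof -
    have dc: "d \<noteq> c" "d \<noteq> c'" using dU cU c'U disj by blast+
    define V1 where "V1 = V + unitv c'"
    have V1E: "V1 e = V e + (if e = c' then 1 else 0)" for e by (simp add: V1_def)
    have V1B: "V1 \<in> Bv E b w"
    proof (rule BvI)
      fix e assume eG: "e \<in> ?G"
      show "0 \<le> V1 e \<and> V1 e \<le> b e"
      proof (cases "e = c'")
        case True
        then have "V1 e = z e" using V1E[of e] Veq[rule_format, of e] dc yz[of e] d4 a'c' by auto
        then show ?thesis using BvD1[OF zB eG] by simp
      next
        case False then show ?thesis using V1E[of e] BvD1[OF VB eG] by simp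
      qed
    next
      fix e assume "e \<notin> ?G" then show "V1 e = 0" using V1E[of e] BvD2[OF VB] c'G by auto
    qed
    have "V1 a' \<ge> z a'" using V1E[of a'] Veq[rule_format, of a'] Vd yz[of a'] a'c' by (cases "d = a'") auto
    moreover have "V1 d \<ge> z d" using V1E[of d] Vd yz[of d] dc by (auto split: if_splits)
    moreover have "\<forall>e'. e' \<noteq> a' \<and> e' \<noteq> d \<longrightarrow> V1 e' = z e'"
      using V1E Veq yz by auto
    ultimately have CV1: "C w V1 = z"
      using notint_fix2[OF cf zB zC ni_z[OF a'U] ni_z[OF dU] V1B] by blast
    define V2 where "V2 = V + unitv c"
    have V2E: "V2 e = V e + (if e = c then 1 else 0)" for e by (simp add: V2_def)
    have V2B: "V2 \<in> Bv E b w"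
    proof (rule BvI)
      fix e assume eG: "e \<in> ?G"
      show "0 \<le> V2 e \<and> V2 e \<le> b e"
      proof (cases "e = c")
        case True
        then have "V2 e = z' e" using V2E[of e] Veq[rule_format, of e] dc yz'[of e] d4 ac by auto
        then show ?thesis using BvD1[OF z'B eG] by simp
      next
        case False then show ?thesis using V2E[of e] BvD1[OF VB eG] by simp
      qed
    next
      fix e assume "e \<notin> ?G" then show "V2 e = 0" using V2E[of e] BvD2[OF VB] cG by auto
    qed
    have "V2 a \<ge> z' a" using V2E[of a] Veq[rule_format, of a] Vd yz'[of a] ac by (cases "d = a") auto
    moreover have "V2 d \<ge> z' d" using V2E[of d] Vd yz'[of d] dc by (auto split: if_splits)
    moreover have "\<forall>e'. e' \<noteq> a \<and> e' \<noteq> d \<longrightarrow> V2 e' = z' e'"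
      using V2E Veq yz' by auto
    ultimately have CV2: "C w V2 = z'"
      using notint_fix2[OF cf z'B z'C ni_z'[OF aU] ni_z'[OF dU] V2B] by blast
    have VV1: "V \<le> V1" by (rule le_funI) (simp add: V1E)
    have VV2: "V \<le> V2" by (rule le_funI) (simp add: V2E)
    have Vy: "y e \<le> V e" for e using Vd Veq[rule_format, of e] by (cases "e = d") auto
    have low: "y e \<le> C w V e" for e
    proof -
      have m1: "min (z e) (V e) \<le> C w V e" using cfA2[OF cf V1B VB VV1, of e] CV1 by simp
      have m2: "min (z' e) (V e) \<le> C w V e" using cfA2[OF cf V2B VB VV2, of e] CV2 by simp
      show ?thesis
      proof (cases "e = a'")
        case True
        then have "y e \<le> z' e" using yz'[of e] d4 by auto
        then show ?thesis using m2 Vy[of e] by linarith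
      next
        case False
        then have "y e \<le> z e" using yz[of e] by auto
        then show ?thesis using m1 Vy[of e] by linarith
      qed
    qed
    have CVB: "C w V \<in> Bv E b w" using cfA0[OF cf VB] by blast
    have "vnorm E w (C w V) \<le> vnorm E w (C w V1)" using cfA3[OF cf V1B VB VV1] .
    then have "sum (C w V) ?G \<le> sum z ?G" using vnorm_Bv[OF CVB] vnorm_Bv[OF zB] CV1 by simp
    then show ?thesis using low sumy by simp
  qed
  have accy: "acceptable E b C w y"
  proof -
    have "\<forall>e. y e \<le> C w y e" using KEY[OF yB aU] by simp
    then have "y \<le> C w y" by (simp add: le_fun_def)
    moreover have "C w y \<le> y" using cfA0[OF cf yB] by blast
    ultimately show ?thesis unfolding acceptable_def using yB by simp
  qed
  have niy: "\<forall>d \<in> UFplus E b C x. \<not> interesting E b C w y d"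
  proof (intro ballI notI)
    fix d assume dU: "d \<in> UFplus E b C x" and "interesting E b C w y d"
    then obtain V where dG: "d \<in> ?G" and VB: "V \<in> Bv E b w" and Vd: "V d > y d"
      and Veq: "\<forall>e'. e' \<noteq> d \<longrightarrow> V e' = y e'" and CVd: "C w V d > y d"
      unfolding interesting_def by blast
    have K: "(\<forall>e. y e \<le> C w V e) \<and> sum (C w V) ?G \<le> sum y ?G"
      using KEY[OF VB dU _ Veq] Vd by simp
    have "sum y ?G + (C w V d - y d) \<le> sum (C w V) ?G"
      by (rule sum_gap[OF fin _ dG]) (use K in auto)
    then show False using K CVd by linarith
  qed
  have ess1: "essential_pair E b C x w z c' a'"
    unfolding essential_pair_def legal_pair_def zy using e2(1,2) accy niy by blast
  have ess2: "essential_pair E b C x w z' c a"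
    unfolding essential_pair_def legal_pair_def z'y using e1(1,2) accy niy by blast
  show ?thesis using zy z'y accy niy ess1 ess2 by simp
qed

end
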